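(* Let $u:\mathbb{T}\to\mathbb{R}$ be smooth. Let $\gamma,\beta>0$ be constants and let $v>0$ (possibly random) be given, and let $\alpha\in(0,\tfrac12)$. Then there exist constants $C,q>0$ depending only on $\gamma,\beta,\alpha$ (and $u$) such that, with parameters $\zeta=(\nu,t,y)$ ranging over $\nu\in(0,1]$, $t\in(0,\nu^{-1}]$, $y\in\mathbb{T}$, the almost implication $$\det(M_t)(y)\le\epsilon\, v\,t^{\gamma}\nu^{\beta}\ \Rightarrow_\epsilon\ \sup_{s\in[0,t]}|u'(y+\sqrt\nu B_s)|\le C\epsilon^q\max\Big\{v^{\frac12}t^{\frac{\gamma-3}{2}}\nu^{\frac\beta2},\ \big(v^\alpha t^{\alpha(\gamma-3)}\nu^{\alpha\beta}h^3\nu^{\frac32}t^{\frac32}\big)^{\frac1{3+2\alpha}},\ \big(v^{\frac\alpha2}t^{\frac{\alpha(\gamma-3)+1}{2}}\nu^{\frac{\alpha\beta+1}{2}}h\big)^{\frac1{1+\alpha}}\Big\}$$ holds, where $h=h(y,\nu,t)=\sup_{s,z\in[0,t],\,\tau\in[0,1]}|u''(y+\sqrt\nu(\tau B_s+(1-\tau)B_z))|$.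
   Context: $(B_t)$ is a standard Brownian motion and $\det(M_t)(y):=\int_0^t\big(\int_r^t u'(y+\sqrt\nu B_s)\,ds-\frac1t\int_0^t\int_m^t u'(y+\sqrt\nu B_s)\,ds\,dm\big)^2dr$. Almost-false terminology: a family of events $A^\zeta_\epsilon$ indexed by parameters $\zeta$ and $\epsilon>0$ is almost false if for every $p>0$ there exist $C_p$ and $\epsilon_0>0$, both independent of $\zeta$, with $\mathbb P(A^\zeta_\epsilon)\le C_p\epsilon^p$ for all $\zeta$ and all $\epsilon\in(0,\epsilon_0]$. One writes $A^\zeta_\epsilon\Rightarrow_\epsilon B^\zeta_\epsilon$ if $A^\zeta_\epsilon\setminus B^\zeta_\epsilon$ is almost false, and $Z\le_\epsilon W$ if $\{Z^\zeta_\epsilon>W^\zeta_\epsilon\}$ is almost false. *)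

theory Defs
  imports "HOL-Probability.Probability"
begin

text \<open>The torus T is identified with R modulo 2 pi; functions on T are 2pi-periodic functions on R.\<close>
definition smooth_periodic :: "(real \<Rightarrow> real) \<Rightarrow> bool" where
  "smooth_periodic u \<longleftrightarrow>
     (\<forall>n. \<forall>x. ((deriv ^^ n) u) differentiable (at x)) \<and> (\<forall>x. u (x + 2 * pi) = u x)"

definition std_brownian_motion :: "'a measure \<Rightarrow> (real \<Rightarrow> 'a \<Rightarrow> real) \<Rightarrow> bool" where
  "std_brownian_motion M B \<longleftrightarrow>
     prob_space M \<and>
     (\<forall>t\<ge>0. B t \<in> borel_measurable M) \<and>
     (\<forall>\<omega>\<in>space M. B 0 \<omega> = 0 \<and> continuous_on {0..} (\<lambda>t. B t \<omega>)) \<and>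
     (\<forall>s t. 0 \<le> s \<longrightarrow> s < t \<longrightarrow>
        distributed M lborel (\<lambda>\<omega>. B t \<omega> - B s \<omega>)
          (\<lambda>x. ennreal (normal_density 0 (sqrt (t - s)) x))) \<and>
     (\<forall>(ts :: nat \<Rightarrow> real) n. 0 \<le> ts 0 \<longrightarrow> (\<forall>i<n. ts i < ts (Suc i)) \<longrightarrow>
        prob_space.indep_vars M (\<lambda>_. borel) (\<lambda>i \<omega>. B (ts (Suc i)) \<omega> - B (ts i) \<omega>) {..<n})"

text \<open>Almost false families of events, indexed by parameters z in Z and eps > 0.
  Events need not be known measurable: we bound their outer probability.\<close>
definition almost_false :: "'a measure \<Rightarrow> 'z set \<Rightarrow> ('z \<Rightarrow> real \<Rightarrow> 'a set) \<Rightarrow> bool" where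
  "almost_false M Z A \<longleftrightarrow>
     (\<forall>p>0. \<exists>Cp \<epsilon>0. \<epsilon>0 > 0 \<and>
        (\<forall>z\<in>Z. \<forall>\<epsilon>. 0 < \<epsilon> \<longrightarrow> \<epsilon> \<le> \<epsilon>0 \<longrightarrow>
           (\<exists>E\<in>sets M. A z \<epsilon> \<inter> space M \<subseteq> E \<and> measure M E \<le> Cp * \<epsilon> powr p)))"

definition almost_implies :: "'a measure \<Rightarrow> 'z set \<Rightarrow> ('z \<Rightarrow> real \<Rightarrow> 'a set) \<Rightarrow> ('z \<Rightarrow> real \<Rightarrow> 'a set) \<Rightarrow> bool" where
  "almost_implies M Z A B \<longleftrightarrow> almost_false M Z (\<lambda>z \<epsilon>. A z \<epsilon> - B z \<epsilon>)"

text \<open>det(M_t)(y) along a path b (b s = B_s(omega)).\<close>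
definition detM :: "(real \<Rightarrow> real) \<Rightarrow> real \<Rightarrow> real \<Rightarrow> real \<Rightarrow> (real \<Rightarrow> real) \<Rightarrow> real" where
  "detM u \<nu> t y b =
     integral {0..t} (\<lambda>r.
       (integral {r..t} (\<lambda>s. deriv u (y + sqrt \<nu> * b s))
        - (1 / t) * integral {0..t} (\<lambda>m. integral {m..t} (\<lambda>s. deriv u (y + sqrt \<nu> * b s)))) ^ 2)"

definition hfun :: "(real \<Rightarrow> real) \<Rightarrow> real \<Rightarrow> real \<Rightarrow> real \<Rightarrow> (real \<Rightarrow> real) \<Rightarrow> real" where
  "hfun u \<nu> t y b =
     Sup ((\<lambda>(s, z, \<tau>). \<bar>deriv (deriv u) (y + sqrt \<nu> * (\<tau> * b s + (1 - \<tau>) * b z))\<bar>)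
            ` ({0..t} \<times> {0..t} \<times> {0..1}))"

definition sup_du :: "(real \<Rightarrow> real) \<Rightarrow> real \<Rightarrow> real \<Rightarrow> real \<Rightarrow> (real \<Rightarrow> real) \<Rightarrow> real" where
  "sup_du u \<nu> t y b = Sup ((\<lambda>s. \<bar>deriv u (y + sqrt \<nu> * b s)\<bar>) ` {0..t})"

end

theory Submission
  imports Defs
begin


lemma chain_dyadic:
  fixes b :: "real \<Rightarrow> real" and t :: real and w W :: "nat \<Rightarrow> real"
  assumes G: "\<And>n j. j < 2^n \<Longrightarrow> \<bar>b (real (Suc j) * t / 2^n) - b (real j * t / 2^n)\<bar> \<le> w n"
    and wW: "\<And>n. w n \<le> W n" and rec: "\<And>n. w (Suc n) + W (Suc n) \<le> W n"
  shows "\<And>n j i. j < 2^n \<Longrightarrow> j*2^d \<le> i \<Longrightarrow> i \<le> (Suc j)*2^d \<Longrightarrow>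
     \<bar>b (real i * t / 2^(n+d)) - b (real j * t / 2^n)\<bar> \<le> W n"
proof (induction d)
  case 0
  then have "i = j \<or> i = Suc j" by auto
  then show ?case using G[OF 0(1)] wW[of n] by auto
next
  case (Suc d)
  have "0 \<le> w (Suc n)" using G[of 0 "Suc n"] by (meson abs_ge_zero order_trans zero_less_numeral zero_less_power)
  have sp: "real (2*j) * t / 2^(Suc n) = real j * t / 2^n" by (simp add: field_simps)
  have sp2: "real i * t / 2^(n + Suc d) = real i * t / 2^(Suc n + d)" by simp
  show ?case
  proof (cases "i \<le> (Suc (2*j)) * 2^d")
    case True
    have j2: "2*j < 2^Suc n" using Suc.prems by simp
    have "(2*j)*2^d \<le> i" using Suc.prems by (simp add: mult.assoc)
    from Suc.IH[OF j2 this True] have "\<bar>b (real i * t / 2 ^ (Suc n + d)) - b (real (2 * j) * t / 2 ^ Suc n)\<bar> \<le> W (Suc n)" .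
    then show ?thesis using sp sp2 rec[of n] \<open>0 \<le> w (Suc n)\<close> by simp
  next
    case False
    have j2: "Suc (2*j) < 2^Suc n" using Suc.prems by simp
    have "i \<le> (Suc (Suc (2*j)))*2^d" using Suc.prems by (simp add: mult.assoc)
    from Suc.IH[OF j2 _ this] False
    have A: "\<bar>b (real i * t / 2 ^ (Suc n + d)) - b (real (Suc (2 * j)) * t / 2 ^ Suc n)\<bar> \<le> W (Suc n)" by simp
    have B: "\<bar>b (real (Suc (2*j)) * t / 2^(Suc n)) - b (real (2*j) * t / 2^(Suc n))\<bar> \<le> w (Suc n)"
      using G[of "2*j" "Suc n"] j2 by simp
    show ?thesis using A B rec[of n] unfolding sp2 sp[symmetric] by linarith
  qed
qed



lemma chain_cont:
  fixes b :: "real \<Rightarrow> real" and t :: real and W :: "nat \<Rightarrow> real"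
  assumes t: "t > 0" and cont: "continuous_on {0..t} b"
    and D: "\<And>d n j i. j < 2^n \<Longrightarrow> j*2^d \<le> i \<Longrightarrow> i \<le> (Suc j)*2^d \<Longrightarrow>
     \<bar>b (real i * t / 2^(n+d)) - b (real j * t / 2^n)\<bar> \<le> W n"
    and j: "j < 2^n" and s1: "real j * t / 2^n \<le> s" and s2: "s \<le> real (Suc j) * t / 2^n"
  shows "\<bar>b s - b (real j * t / 2^n)\<bar> \<le> W n"
proof -
  define i where "i d = nat \<lfloor>s * 2^(n+d) / t\<rfloor>" for d
  define x where "x d = real (i d) * t / 2^(n+d)" for d
  have jn: "real j * t / 2^n * 2^(n+d) / t = real j * 2^d" for d
    using t by (simp add: power_add field_simps)
  have jn2: "real (Suc j) * t / 2^n * 2^(n+d) / t = real (Suc j) * 2^d" for d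
    using t by (simp add: power_add field_simps)
  have lo: "real j * 2^d \<le> s * 2^(n+d) / t" for d
  proof -
    have "real j * t / 2^n * 2^(n+d) / t \<le> s * 2^(n+d) / t"
      using s1 t by (intro divide_right_mono mult_right_mono) auto
    then show ?thesis using jn by simp
  qed
  have hi: "s * 2^(n+d) / t \<le> real (Suc j) * 2^d" for d
  proof -
    have "s * 2^(n+d) / t \<le> real (Suc j) * t / 2^n * 2^(n+d) / t"
      using s2 t by (intro divide_right_mono mult_right_mono) auto
    then show ?thesis using jn2 by simp
  qed
  have s0: "0 \<le> s" using s1 t by (meson order_trans zero_le_divide_iff mult_nonneg_nonneg of_nat_0_le_iff less_imp_le zero_le_power zero_le_numeral)
  have ilo: "j*2^d \<le> i d" for d
  proof -
    have "real (j*2^d) \<le> s * 2^(n+d) / t" using lo[of d] by simp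
    then have "int (j*2^d) \<le> \<lfloor>s * 2^(n+d) / t\<rfloor>" by (simp add: le_floor_iff)
    then show ?thesis unfolding i_def by linarith
  qed
  have ihi: "i d \<le> Suc j * 2^d" for d
  proof -
    have "s * 2^(n+d) / t \<le> real (Suc j * 2^d)" using hi[of d] by (simp add: algebra_simps)
    then have "\<lfloor>s * 2^(n+d) / t\<rfloor> \<le> int (Suc j * 2^d)" by (simp add: floor_le_iff)
    then show ?thesis unfolding i_def by linarith
  qed
  have fl: "real (i d) \<le> s * 2^(n+d) / t \<and> s * 2^(n+d) / t < real (i d) + 1" for d
  proof -
    have nn: "0 \<le> s * 2^(n+d) / t" using s0 t by simp
    have "real (i d) = of_int \<lfloor>s * 2^(n+d) / t\<rfloor>" unfolding i_def using nn by simp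
    then show ?thesis by linarith
  qed
  have xle: "x d \<le> s" for d
  proof -
    have "real (i d) * t \<le> s * 2^(n+d)" using fl[of d] t by (simp add: field_simps)
    then show ?thesis unfolding x_def by (simp add: field_simps)
  qed
  have xge: "s - t / 2^(n+d) < x d" for d
  proof -
    have "s * 2^(n+d) < (real (i d) + 1) * t" using fl[of d] t by (simp add: field_simps)
    then have "s * 2^(n+d) / 2^(n+d) < (real (i d) + 1) * t / 2^(n+d)"
      by (intro divide_strict_right_mono) auto
    then show ?thesis unfolding x_def by (simp add: add_divide_distrib distrib_right)
  qed
  have x0: "0 \<le> x d" for d unfolding x_def using t by simp
  have st: "s \<le> t"
  proof -
    have "Suc j \<le> 2^n" using j by simp
    then have "real (Suc j) \<le> 2^n" by (metis of_nat_le_iff of_nat_numeral of_nat_power)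
    then have "real (Suc j) * t / 2^n \<le> 2^n * t / 2^n" using t by (intro divide_right_mono mult_right_mono) auto
    then show ?thesis using s2 t by simp
  qed
  have xt: "x d \<le> t" for d using xle[of d] st by simp
  have lim0: "(\<lambda>d. t / 2^(n+d)) \<longlonglongrightarrow> 0"
  proof -
    have "(\<lambda>d. (t / 2^n) * (1/2)^d) \<longlonglongrightarrow> (t/2^n) * 0"
      by (intro tendsto_mult tendsto_const LIMSEQ_power_zero) auto
    then show ?thesis by (simp add: power_add field_simps)
  qed
  have xs: "x \<longlonglongrightarrow> s"
  proof -
    have "(\<lambda>d. s - t / 2^(n+d)) \<longlonglongrightarrow> s - 0" by (intro tendsto_diff tendsto_const lim0)
    then have A: "(\<lambda>d. s - t / 2^(n+d)) \<longlonglongrightarrow> s" by simp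
    have e1: "\<forall>\<^sub>F d in sequentially. s - t / 2^(n+d) \<le> x d" using xge less_imp_le by (intro always_eventually) blast
    have e2: "\<forall>\<^sub>F d in sequentially. x d \<le> s" using xle by (intro always_eventually) blast
    show ?thesis
      by (rule real_tendsto_sandwich[OF e1 e2 A tendsto_const])
  qed
  have bx: "(\<lambda>d. b (x d)) \<longlonglongrightarrow> b s"
  proof (rule continuous_on_tendsto_compose[OF cont xs])
    show "s \<in> {0..t}" using s0 st by simp
    show "\<forall>\<^sub>F d in sequentially. x d \<in> {0..t}" using x0 xt by (intro always_eventually) auto
  qed
  have "(\<lambda>d. \<bar>b (x d) - b (real j * t / 2^n)\<bar>) \<longlonglongrightarrow> \<bar>b s - b (real j * t / 2^n)\<bar>"
    by (intro tendsto_rabs tendsto_diff bx tendsto_const)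
  moreover have "\<bar>b (x d) - b (real j * t / 2^n)\<bar> \<le> W n" for d
    unfolding x_def using D[OF j ilo ihi] .
  ultimately show ?thesis by (intro LIMSEQ_le_const2[of _ _ "W n"]) auto
qed



lemma det_lower:
  fixes g :: "real \<Rightarrow> real" and t m a p L :: real
  assumes cont: "continuous_on {0..t} g" and p0: "0 \<le> p" and pL: "p + L \<le> t" and L: "L > 0" and a: "a > 0"
    and sg: "(\<forall>s\<in>{p..p+L}. a \<le> g s) \<or> (\<forall>s\<in>{p..p+L}. g s \<le> -a)"
  shows "a^2 * L^3 / 64 \<le> integral {0..t} (\<lambda>r. (integral {r..t} g - m)^2)"
proof -
  define F where "F r = integral {r..t} g" for r
  have gi: "g integrable_on {x..y}" if "0 \<le> x" "y \<le> t" for x y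
    using that by (intro integrable_continuous_real continuous_on_subset[OF cont]) auto
  have Fc: "continuous_on {0..t} F"
    unfolding F_def by (rule indefinite_integral_continuous_1'[OF gi]) auto
  have Fsplit: "F r1 - F r4 = integral {r1..r4} g" if "0 \<le> r1" "r1 \<le> r4" "r4 \<le> t" for r1 r4
    using Henstock_Kurzweil_Integration.integral_combine[OF that(2) that(3) gi[OF that(1) order.refl]] unfolding F_def by simp
  have diff: "a * L / 2 \<le> \<bar>F r1 - F r4\<bar>" if r1: "r1 \<in> {p..p+L/4}" and r4: "r4 \<in> {p+3*L/4..p+L}" for r1 r4
  proof -
    have le: "0 \<le> r1" "r1 \<le> r4" "r4 \<le> t" using r1 r4 p0 pL L by auto
    have sub: "{r1..r4} \<subseteq> {p..p+L}" using r1 r4 by auto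
    have ci: "(\<lambda>x. a) integrable_on {r1..r4}" by (rule integrable_const_ivl)
    have gi': "g integrable_on {r1..r4}" using gi le by auto
    have len: "L/2 \<le> r4 - r1" using r1 r4 by auto
    show ?thesis
    proof (cases "\<forall>s\<in>{p..p+L}. a \<le> g s")
      case True
      have "integral {r1..r4} (\<lambda>x. a) \<le> integral {r1..r4} g"
        by (rule integral_le[OF ci gi']) (use True sub in auto)
      then have "a * (r4 - r1) \<le> F r1 - F r4" using Fsplit[OF le] le by (simp add: mult.commute)
      moreover have "a * (L/2) \<le> a * (r4 - r1)" using len a by (intro mult_left_mono) auto
      ultimately show ?thesis by linarith
    next
      case False
      then have F: "\<forall>s\<in>{p..p+L}. g s \<le> -a" using sg by blast
      have "integral {r1..r4} g \<le> integral {r1..r4} (\<lambda>x. -a)"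
        by (rule integral_le[OF gi']) (use F sub in auto)
      then have "F r1 - F r4 \<le> - a * (r4 - r1)" using Fsplit[OF le] le by (simp add: mult.commute)
      moreover have "a * (L/2) \<le> a * (r4 - r1)" using len a by (intro mult_left_mono) auto
      ultimately show ?thesis by linarith
    qed
  qed
  have Hc: "continuous_on {0..t} (\<lambda>r. (F r - m)^2)"
    by (intro continuous_intros Fc)
  have Hi: "(\<lambda>r. (F r - m)^2) integrable_on {x..y}" if "0 \<le> x" "y \<le> t" for x y
    using that by (intro integrable_continuous_real continuous_on_subset[OF Hc]) auto
  have quarter: "a^2 * L^3 / 64 \<le> integral {x..x + L/4} (\<lambda>r. (F r - m)^2)"
    if x: "0 \<le> x" "x + L/4 \<le> t" and big: "\<forall>r\<in>{x..x+L/4}. a * L / 4 \<le> \<bar>F r - m\<bar>" for x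
  proof -
    have "integral {x..x + L/4} (\<lambda>r. (a*L/4)^2) \<le> integral {x..x + L/4} (\<lambda>r. (F r - m)^2)"
    proof (rule integral_le)
      show "(\<lambda>r. (F r - m)^2) integrable_on {x..x + L/4}" using Hi x by auto
      fix r assume "r \<in> {x..x + L/4}"
      then have "a * L / 4 \<le> \<bar>F r - m\<bar>" using big by auto
      moreover have "0 \<le> a * L / 4" using a L by auto
      ultimately show "(a*L/4)^2 \<le> (F r - m)^2"
        by (metis abs_of_nonneg power2_abs power_mono)
    qed (rule integrable_const_ivl)
    moreover have "integral {x..x + L/4} (\<lambda>r. (a*L/4)^2) = a^2 * L^3 / 64" using L
      by (simp add: power2_eq_square power3_eq_cube field_simps)
    ultimately show ?thesis by simp
  qed
  have nn: "\<forall>r\<in>{0..t}. 0 \<le> (F r - m)^2" by simp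
  have sub: "integral {x..x + L/4} (\<lambda>r. (F r - m)^2) \<le> integral {0..t} (\<lambda>r. (F r - m)^2)"
    if "0 \<le> x" "x + L/4 \<le> t" for x
    using that L by (intro integral_subset_le[OF _ Hi Hi nn]) auto
  show ?thesis
  proof (cases "\<forall>r\<in>{p..p+L/4}. a * L / 4 \<le> \<bar>F r - m\<bar>")
    case True
    have "0 \<le> p" "p + L/4 \<le> t" using p0 pL L by auto
    then show ?thesis using quarter[OF _ _ True] sub unfolding F_def by (meson order.trans)
  next
    case False
    then obtain r1 where r1: "r1 \<in> {p..p+L/4}" "\<bar>F r1 - m\<bar> < a * L / 4" by (auto simp: not_le)
    have big: "\<forall>r\<in>{p+3*L/4..p+3*L/4+L/4}. a * L / 4 \<le> \<bar>F r - m\<bar>"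
    proof
      fix r assume "r \<in> {p+3*L/4..p+3*L/4+L/4}"
      then have r: "r \<in> {p+3*L/4..p+L}" by auto
      have "a * L / 2 \<le> \<bar>F r1 - F r\<bar>" using diff[OF r1(1) r] .
      then show "a * L / 4 \<le> \<bar>F r - m\<bar>" using r1(2) by linarith
    qed
    have "0 \<le> p+3*L/4" "p+3*L/4 + L/4 \<le> t" using p0 pL L by auto
    then show ?thesis using quarter[OF _ _ big] sub unfolding F_def by (meson order.trans)
  qed
qed



lemma tail_normal:
  fixes X :: "'a \<Rightarrow> real"
  assumes P: "prob_space M" and D: "distributed M lborel X (\<lambda>x. ennreal (normal_density 0 \<sigma> x))"
    and s: "\<sigma> > 0" and l: "l > 0"
  shows "measure M {\<omega>\<in>space M. l \<le> \<bar>X \<omega>\<bar>} \<le> (fact (2*k) / ((2 / \<sigma>\<^sup>2)^k * fact k)) / l^(2*k)"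
proof -
  interpret prob_space M by (rule P)
  have Xm[measurable]: "X \<in> borel_measurable M" using distributed_measurable[OF D] by simp
  have mom: "has_bochner_integral lborel (\<lambda>x. normal_density 0 \<sigma> x * x ^ (2 * k)) (fact (2 * k) / ((2 / \<sigma>\<^sup>2)^k * fact k))"
    using normal_moment_even[OF s, of 0 k] by simp
  have nn: "\<And>x. 0 \<le> normal_density 0 \<sigma> x" by (simp add: normal_density_nonneg)
  have int: "integrable M (\<lambda>\<omega>. X \<omega> ^ (2*k))"
  proof -
    have "integrable lborel (\<lambda>x. normal_density 0 \<sigma> x * x ^ (2 * k))" using mom by (rule integrable.intros)
    then show ?thesis using distributed_integrable[OF D, of "\<lambda>x. x^(2*k)"] nn by simp
  qed
  have ieq: "(\<integral>\<omega>. X \<omega> ^ (2*k) \<partial>M) = fact (2 * k) / ((2 / \<sigma>\<^sup>2)^k * fact k)"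
    using distributed_integral[OF D, of "\<lambda>x. x^(2*k)"] mom nn has_bochner_integral_integral_eq by fastforce
  have sub: "{\<omega>\<in>space M. l \<le> \<bar>X \<omega>\<bar>} \<subseteq> {\<omega>\<in>space M. l^(2*k) \<le> X \<omega> ^ (2*k)}"
  proof safe
    fix \<omega> assume "l \<le> \<bar>X \<omega>\<bar>"
    then have "l^(2*k) \<le> \<bar>X \<omega>\<bar>^(2*k)" using l by (intro power_mono) auto
    then show "l^(2*k) \<le> X \<omega> ^ (2*k)" by (simp add: power_even_abs)
  qed
  have "measure M {\<omega>\<in>space M. l \<le> \<bar>X \<omega>\<bar>} \<le> measure M {\<omega>\<in>space M. l^(2*k) \<le> X \<omega> ^ (2*k)}"
    by (intro finite_measure_mono sub) measurable
  also have "\<dots> \<le> (\<integral>\<omega>. X \<omega> ^ (2*k) \<partial>M) / l^(2*k)"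
    using l by (intro integral_Markov_inequality_measure[OF int, of "space M"]) (auto simp: zero_le_even_power)
  finally show ?thesis using ieq by simp
qed

lemma incr_tail:
  assumes BM: "std_brownian_motion M B" and s: "0 \<le> s" "s < s'" and l: "l > 0"
  shows "measure M {\<omega>\<in>space M. l \<le> \<bar>B s' \<omega> - B s \<omega>\<bar>} \<le> fact (2*k) / (2^k * fact k) * (s' - s)^k / l^(2*k)"
proof -
  have P: "prob_space M" and D: "distributed M lborel (\<lambda>\<omega>. B s' \<omega> - B s \<omega>) (\<lambda>x. ennreal (normal_density 0 (sqrt (s' - s)) x))"
    using BM s unfolding std_brownian_motion_def by auto
  have sp: "sqrt (s' - s) > 0" using s by simp
  have "measure M {\<omega>\<in>space M. l \<le> \<bar>B s' \<omega> - B s \<omega>\<bar>} \<le> (fact (2*k) / ((2 / (sqrt (s'-s))\<^sup>2)^k * fact k)) / l^(2*k)"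
    by (rule tail_normal[OF P D sp l])
  also have "(sqrt (s'-s))\<^sup>2 = s' - s" using s by simp
  finally show ?thesis using s by (simp add: power_divide field_simps)
qed



definition badset :: "'a measure \<Rightarrow> (real \<Rightarrow> 'a \<Rightarrow> real) \<Rightarrow> real \<Rightarrow> real \<Rightarrow> real \<Rightarrow> 'a set" where
  "badset M B t L r = (\<Union>n. \<Union>j\<in>{..<(2::nat)^n}. {\<omega>\<in>space M. L * r^n \<le> \<bar>B (real (Suc j) * t / 2^n) \<omega> - B (real j * t / 2^n) \<omega>\<bar>})"

lemma badset_sets:
  assumes BM: "std_brownian_motion M B" and t: "t > 0"
  shows "badset M B t L r \<in> sets M"
proof -
  have m: "B s \<in> borel_measurable M" if "s \<ge> 0" for s using BM that unfolding std_brownian_motion_def by auto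
  have m1: "(\<lambda>\<omega>. B (real (Suc j) * t / 2^n) \<omega>) \<in> borel_measurable M" for n j by (rule m) (use t in simp)
  have m2: "(\<lambda>\<omega>. B (real j * t / 2^n) \<omega>) \<in> borel_measurable M" for n j by (rule m) (use t in simp)
  show ?thesis unfolding badset_def using m1 m2 by measurable
qed

lemma ratio_bound:
  fixes t \<epsilon> \<kappa> \<alpha> p :: real and k n :: nat
  assumes t: "t > 0" and e: "0 < \<epsilon>" "\<epsilon> \<le> 1" and k1: "real k * (1 - 2*\<alpha>) \<ge> 2" and k2: "2 * \<kappa> * real k \<ge> p"
  shows "2^n * (t/2^n)^k / ((\<epsilon> powr (-\<kappa>) * sqrt t) * (2 powr (-\<alpha>))^n)^(2*k) \<le> \<epsilon> powr p * (1/2)^n"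
proof -
  have A: "((\<epsilon> powr (-\<kappa>) * sqrt t) * (2 powr (-\<alpha>))^n)^(2*k) = \<epsilon> powr (-2*\<kappa>*k) * t^k * 2 powr (-2*\<alpha>*n*k)"
  proof -
    have "((\<epsilon> powr (-\<kappa>) * sqrt t) * (2 powr (-\<alpha>))^n)^(2*k) = (\<epsilon> powr (-\<kappa>))^(2*k) * (sqrt t)^(2*k) * ((2 powr (-\<alpha>))^n)^(2*k)"
      by (simp add: power_mult_distrib)
    also have "(\<epsilon> powr (-\<kappa>))^(2*k) = \<epsilon> powr (-2*\<kappa>*k)" using e by (simp add: powr_realpow[symmetric] powr_powr mult_ac)
    also have "(sqrt t)^(2*k) = t^k" using t by (simp add: power_mult)
    also have "((2 powr (-\<alpha>))^n)^(2*k) = 2 powr (-2*\<alpha>*n*k)"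
      by (simp add: powr_realpow[symmetric] powr_powr power_mult[symmetric] mult_ac)
    finally show ?thesis .
  qed
  have B: "2^n * (t/2^n)^k = t^k * 2 powr (real n - real n * real k)"
    by (simp add: power_divide powr_diff powr_realpow[symmetric] powr_powr mult_ac)
  have "2^n * (t/2^n)^k / ((\<epsilon> powr (-\<kappa>) * sqrt t) * (2 powr (-\<alpha>))^n)^(2*k)
      = \<epsilon> powr (2*\<kappa>*k) * 2 powr (real n - real n * real k + 2*\<alpha>*n*k)"
    unfolding A B using t e by (simp add: powr_add powr_minus field_simps) (simp add: powr_add[symmetric] algebra_simps)
  also have "\<dots> \<le> \<epsilon> powr p * 2 powr (- real n)"
  proof (rule mult_mono)
    show "\<epsilon> powr (2*\<kappa>*k) \<le> \<epsilon> powr p" using e k2 by (intro powr_mono') auto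
    have "real n - real n * real k + 2*\<alpha>*n*k = real n * (1 - real k * (1 - 2*\<alpha>))" by (simp add: algebra_simps)
    also have "\<dots> \<le> real n * (-1)" using k1 by (intro mult_left_mono) auto
    finally show "2 powr (real n - real n * real k + 2*\<alpha>*n*k) \<le> 2 powr (- real n)" by simp
  qed auto
  also have "2 powr (- real n) = (1/2)^n" by (simp add: powr_minus powr_realpow power_one_over inverse_eq_divide)
  finally show ?thesis .
qed


lemma bad_bound:
  fixes t \<epsilon> \<kappa> \<alpha> p :: real and k :: nat
  assumes BM: "std_brownian_motion M B" and t: "t > 0" and e: "0 < \<epsilon>" "\<epsilon> \<le> 1"
    and k1: "real k * (1 - 2*\<alpha>) \<ge> 2" and k2: "2 * \<kappa> * real k \<ge> p"
  shows "measure M (badset M B t (\<epsilon> powr (-\<kappa>) * sqrt t) (2 powr (-\<alpha>))) \<le> 2 * (fact (2*k) / (2^k * fact k)) * \<epsilon> powr p"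
proof -
  interpret prob_space M using BM unfolding std_brownian_motion_def by auto
  define L where "L = \<epsilon> powr (-\<kappa>) * sqrt t"
  define r :: real where "r = 2 powr (-\<alpha>)"
  define c :: real where "c = fact (2*k) / (2^k * fact k)"
  define E where "E n j = {\<omega>\<in>space M. L * r^n \<le> \<bar>B (real (Suc j) * t / 2^n) \<omega> - B (real j * t / 2^n) \<omega>\<bar>}" for n j
  define A where "A n = (\<Union>j\<in>{..<(2::nat)^n}. E n j)" for n
  have m: "B s \<in> borel_measurable M" if "s \<ge> 0" for s using BM that unfolding std_brownian_motion_def by auto
  have m1: "(\<lambda>\<omega>. B (real (Suc j) * t / 2^n) \<omega>) \<in> borel_measurable M" for n j by (rule m) (use t in simp)
  have m2: "(\<lambda>\<omega>. B (real j * t / 2^n) \<omega>) \<in> borel_measurable M" for n j by (rule m) (use t in simp)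
  have Es: "E n j \<in> sets M" for n j unfolding E_def using m1 m2 by measurable
  have As: "A n \<in> sets M" for n unfolding A_def using Es by auto
  have c0: "0 \<le> c" unfolding c_def by simp
  have Lp: "L * r^n > 0" for n unfolding L_def r_def using t e by simp
  have mE: "measure M (E n j) \<le> c * (t/2^n)^k / (L * r^n)^(2*k)" for n j
  proof -
    have "measure M (E n j) \<le> c * (real (Suc j) * t / 2^n - real j * t / 2^n)^k / (L * r^n)^(2*k)"
      unfolding E_def c_def using t
      by (intro incr_tail[OF BM _ _ Lp]) (auto simp: field_simps)
    also have "real (Suc j) * t / 2^n - real j * t / 2^n = t / 2^n" by (simp add: field_simps)
    finally show ?thesis .
  qed
  have mA: "measure M (A n) \<le> c * \<epsilon> powr p * (1/2)^n" for n
  proof -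
    have "measure M (A n) \<le> (\<Sum>j\<in>{..<(2::nat)^n}. measure M (E n j))"
      unfolding A_def by (intro measure_UNION_le Es) auto
    also have "\<dots> \<le> (\<Sum>j\<in>{..<(2::nat)^n}. c * (t/2^n)^k / (L * r^n)^(2*k))"
      by (intro sum_mono mE)
    also have "\<dots> = c * (2^n * (t/2^n)^k / (L * r^n)^(2*k))" by simp
    also have "\<dots> \<le> c * (\<epsilon> powr p * (1/2)^n)"
      unfolding L_def r_def power_mult_distrib
      by (intro mult_left_mono c0 ratio_bound[OF t e k1 k2, of n, unfolded power_mult_distrib])
    finally show ?thesis by simp
  qed
  have sg: "summable (\<lambda>n. c * \<epsilon> powr p * (1/2::real)^n)" by (intro summable_mult summable_geometric) simp
  have sA: "summable (\<lambda>n. measure M (A n))"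
    by (rule summable_comparison_test'[OF sg, of 0]) (use mA in auto)
  have "badset M B t L r = (\<Union>n. A n)" unfolding badset_def A_def E_def by simp
  then have "measure M (badset M B t L r) \<le> (\<Sum>n. measure M (A n))"
    using finite_measure_subadditive_countably[of A] As sA by auto
  also have "\<dots> \<le> (\<Sum>n. c * \<epsilon> powr p * (1/2::real)^n)" by (intro suminf_le mA sA sg)
  also have "\<dots> = c * \<epsilon> powr p * 2" by (subst suminf_mult) (auto simp: suminf_geometric)
  finally show ?thesis unfolding L_def r_def c_def by (simp add: mult_ac)
qed



lemma sp_diff: "smooth_periodic u \<Longrightarrow> (deriv ^^ n) u differentiable (at x)"
  unfolding smooth_periodic_def by auto

lemma sp_d1: "smooth_periodic u \<Longrightarrow> (deriv u has_real_derivative deriv (deriv u) x) (at x)"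
  using sp_diff[of u 1 x] by (simp add: DERIV_deriv_iff_real_differentiable)

lemma sp_c1: "smooth_periodic u \<Longrightarrow> continuous_on UNIV (deriv u)"
  using sp_diff[of u 1] by (auto intro!: continuous_at_imp_continuous_on differentiable_imp_continuous_within)

lemma sp_c2: "smooth_periodic u \<Longrightarrow> continuous_on UNIV (deriv (deriv u))"
  using sp_diff[of u 2] by (auto simp: numeral_2_eq_2 intro!: continuous_at_imp_continuous_on differentiable_imp_continuous_within)

lemma h_props:
  fixes b :: "real \<Rightarrow> real" and t :: real
  assumes sp: "smooth_periodic u" and t: "t \<ge> 0" and bc: "continuous_on {0..t} b"
  shows "bdd_above ((\<lambda>(s, z, \<tau>). \<bar>deriv (deriv u) (y + sqrt \<nu> * (\<tau> * b s + (1 - \<tau>) * b z))\<bar>)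
            ` ({0..t} \<times> {0..t} \<times> {0..1}))" (is "bdd_above (?f ` ?S)")
proof -
  have c1: "continuous_on ?S (\<lambda>x. b (fst x))"
    by (rule continuous_on_compose2[OF bc continuous_on_fst]) auto
  have c2: "continuous_on ?S (\<lambda>x. b (fst (snd x)))"
    by (rule continuous_on_compose2[OF bc]) (auto intro!: continuous_intros)
  have c3: "continuous_on ?S (\<lambda>x. y + sqrt \<nu> * (snd (snd x) * b (fst x) + (1 - snd (snd x)) * b (fst (snd x))))"
    by (intro continuous_intros c1 c2)
  have "continuous_on ?S (\<lambda>x. \<bar>deriv (deriv u) (y + sqrt \<nu> * (snd (snd x) * b (fst x) + (1 - snd (snd x)) * b (fst (snd x))))\<bar>)"
    by (intro continuous_intros continuous_on_compose2[OF sp_c2[OF sp] c3]) auto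
  moreover have "?f = (\<lambda>x. \<bar>deriv (deriv u) (y + sqrt \<nu> * (snd (snd x) * b (fst x) + (1 - snd (snd x)) * b (fst (snd x))))\<bar>)"
    by (auto simp: case_prod_beta)
  ultimately have "continuous_on ?S ?f" by simp
  moreover have "compact ?S" by (intro compact_Times) auto
  ultimately have "compact (?f ` ?S)" by (rule compact_continuous_image)
  then show ?thesis by (intro bounded_imp_bdd_above compact_imp_bounded)
qed

lemma h_ge:
  assumes sp: "smooth_periodic u" and t: "t \<ge> 0" and bc: "continuous_on {0..t} b"
    and s: "s \<in> {0..t}" "z \<in> {0..t}" "\<tau> \<in> {0..1}"
  shows "\<bar>deriv (deriv u) (y + sqrt \<nu> * (\<tau> * b s + (1 - \<tau>) * b z))\<bar> \<le> hfun u \<nu> t y b"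
  unfolding hfun_def
  by (rule cSup_upper[OF _ h_props[OF sp t bc]]) (use s in force)

lemma h_nonneg:
  assumes sp: "smooth_periodic u" and t: "t \<ge> 0" and bc: "continuous_on {0..t} b"
  shows "0 \<le> hfun u \<nu> t y b"
  using h_ge[OF sp t bc, of 0 0 0 y \<nu>] t by (meson abs_ge_zero atLeastAtMost_iff order.trans order.refl zero_le_one)

lemma g_lip_aux:
  assumes sp: "smooth_periodic u" and t: "t \<ge> 0" and bc: "continuous_on {0..t} b" and nu: "\<nu> \<ge> 0"
    and s: "s \<in> {0..t}" "z \<in> {0..t}" and lt: "y + sqrt \<nu> * b z < y + sqrt \<nu> * b s"
  shows "\<bar>deriv u (y + sqrt \<nu> * b s) - deriv u (y + sqrt \<nu> * b z)\<bar> \<le> hfun u \<nu> t y b * sqrt \<nu> * \<bar>b s - b z\<bar>"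
proof -
  define p1 where "p1 = y + sqrt \<nu> * b s"
  define p2 where "p2 = y + sqrt \<nu> * b z"
  have "p2 < p1" using lt unfolding p1_def p2_def .
  from MVT2[OF this, of "deriv u" "deriv (deriv u)"] sp_d1[OF sp]
  obtain x where x: "p2 < x" "x < p1" "deriv u p1 - deriv u p2 = (p1 - p2) * deriv (deriv u) x" by blast
  define \<tau> where "\<tau> = (x - p2) / (p1 - p2)"
  have \<tau>: "\<tau> \<in> {0..1}" unfolding \<tau>_def using x by auto
  have "x = p2 + \<tau> * (p1 - p2)" unfolding \<tau>_def using \<open>p2 < p1\<close> by simp
  then have xe: "x = y + sqrt \<nu> * (\<tau> * b s + (1 - \<tau>) * b z)"
    unfolding p1_def p2_def by (simp add: algebra_simps)
  have "\<bar>deriv (deriv u) x\<bar> \<le> hfun u \<nu> t y b" unfolding xe by (rule h_ge[OF sp t bc s \<tau>])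
  moreover have "\<bar>p1 - p2\<bar> = sqrt \<nu> * \<bar>b s - b z\<bar>" unfolding p1_def p2_def using nu
    by (simp add: abs_mult right_diff_distrib[symmetric])
  ultimately have "\<bar>(p1 - p2) * deriv (deriv u) x\<bar> \<le> sqrt \<nu> * \<bar>b s - b z\<bar> * hfun u \<nu> t y b"
    by (simp add: abs_mult mult_left_mono)
  then show ?thesis using x(3) unfolding p1_def p2_def by (simp add: mult_ac)
qed

lemma g_lip:
  assumes sp: "smooth_periodic u" and t: "t \<ge> 0" and bc: "continuous_on {0..t} b" and nu: "\<nu> \<ge> 0"
    and s: "s \<in> {0..t}" "z \<in> {0..t}"
  shows "\<bar>deriv u (y + sqrt \<nu> * b s) - deriv u (y + sqrt \<nu> * b z)\<bar> \<le> hfun u \<nu> t y b * sqrt \<nu> * \<bar>b s - b z\<bar>"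
proof (cases "y + sqrt \<nu> * b z < y + sqrt \<nu> * b s")
  case True then show ?thesis by (rule g_lip_aux[OF sp t bc nu s])
next
  case False
  show ?thesis
  proof (cases "y + sqrt \<nu> * b s < y + sqrt \<nu> * b z")
    case True
    from g_lip_aux[OF sp t bc nu s(2) s(1) True] show ?thesis by (simp add: abs_minus_commute)
  next
    case False2: False
    then have "y + sqrt \<nu> * b s = y + sqrt \<nu> * b z" using False by linarith
    then have "deriv u (y + sqrt \<nu> * b s) = deriv u (y + sqrt \<nu> * b z)" by (rule arg_cong)
    moreover have "0 \<le> hfun u \<nu> t y b * sqrt \<nu> * \<bar>b s - b z\<bar>" using h_nonneg[OF sp t bc] nu by simp
    ultimately show ?thesis by simp
  qed
qed

lemma g_cont:
  assumes sp: "smooth_periodic u" and bc: "continuous_on {0..t} b"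
  shows "continuous_on {0..t} (\<lambda>s. deriv u (y + sqrt \<nu> * b s))"
  by (rule continuous_on_compose2[OF sp_c1[OF sp]]) (auto intro!: continuous_intros bc)

lemma sup_du_le:
  assumes t: "t \<ge> 0" and H: "\<And>s. s \<in> {0..t} \<Longrightarrow> \<bar>deriv u (y + sqrt \<nu> * b s)\<bar> \<le> X"
  shows "sup_du u \<nu> t y b \<le> X"
  unfolding sup_du_def using t H by (intro cSup_least) auto



lemma alg_A:
  fixes c t \<nu> v \<epsilon> \<gamma> \<beta> q :: real
  assumes c: "c > 0" and t: "t > 0" and nu: "\<nu> > 0" and v: "v > 0" and e: "0 < \<epsilon>" "\<epsilon> \<le> 1"
    and q: "0 < q" "q \<le> 1/2"
    and H: "c^2 * t^3 / 256 \<le> \<epsilon> * v * t powr \<gamma> * \<nu> powr \<beta>"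
  shows "c \<le> 16 * \<epsilon> powr q * (v powr (1/2) * t powr ((\<gamma> - 3) / 2) * \<nu> powr (\<beta> / 2))"
proof -
  have "ln (c^2 * t^3 / 256) \<le> ln (\<epsilon> * v * t powr \<gamma> * \<nu> powr \<beta>)"
    using H c t nu v e by (subst ln_le_cancel_iff) auto
  then have H1: "2 * ln c + 3 * ln t - ln 256 \<le> ln \<epsilon> + ln v + \<gamma> * ln t + \<beta> * ln \<nu>"
    using c t nu v e by (simp add: ln_mult ln_div ln_realpow ln_powr)
  have l256: "ln (256::real) = 8 * ln 2" using ln_realpow[of 2 8] by simp
  have l16: "ln (16::real) = 4 * ln 2" using ln_realpow[of 2 4] by simp
  have le0: "ln \<epsilon> \<le> 0" using e by simp
  have qe: "(1/2) * ln \<epsilon> \<le> q * ln \<epsilon>" using le0 q by (intro mult_right_mono_neg) auto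
  have "ln c \<le> 4 * ln 2 + q * ln \<epsilon> + ln v / 2 + (\<gamma> * ln t) / 2 - 3 * ln t / 2 + (\<beta> * ln \<nu>) / 2"
    using H1 qe l256 l16 by linarith
  also have "\<dots> = ln (16 * \<epsilon> powr q * (v powr (1/2) * t powr ((\<gamma> - 3) / 2) * \<nu> powr (\<beta> / 2)))"
    using t nu v e l16 by (simp add: ln_mult ln_powr algebra_simps) (simp add: field_simps)
  finally show ?thesis using c t nu v e by (subst (asm) ln_le_cancel_iff) auto
qed



lemma alg_B:
  fixes c t \<nu> v \<epsilon> \<gamma> \<beta> \<alpha> h :: real and N :: nat
  assumes c: "c > 0" and t: "t > 0" and nu: "\<nu> > 0" and v: "v > 0" and e: "0 < \<epsilon>" "\<epsilon> \<le> 1"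
    and a: "0 < \<alpha>" and h: "h > 0"
    and H1: "c^2 * (t / 2^(Suc N))^3 / 256 \<le> \<epsilon> * v * t powr \<gamma> * \<nu> powr \<beta>"
    and H2: "c / 2 < 2 * h * sqrt \<nu> * ((\<epsilon> powr (-(\<alpha>/6)) * sqrt t) * (2 powr (-\<alpha>))^N / (1 - 2 powr (-\<alpha>)))"
  shows "c \<le> (512 * 2048 powr \<alpha> / (1 - 2 powr (-\<alpha>))^3) powr (1 / (3 + 2*\<alpha>)) * \<epsilon> powr (\<alpha> / (2 * (3 + 2*\<alpha>))) *
     (v powr \<alpha> * t powr (\<alpha> * (\<gamma> - 3)) * \<nu> powr (\<alpha> * \<beta>) * h ^ 3 * \<nu> powr (3/2) * t powr (3/2)) powr (1 / (3 + 2 * \<alpha>))"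
proof -
  define a0 where "a0 = 1 - 2 powr (-\<alpha>)"
  have g1: "1 < (2::real) powr \<alpha>" using a by (intro gr_one_powr) auto
  have r1: "2 powr (-\<alpha>) < (1::real)" using g1 by (simp add: powr_minus inverse_less_1_iff)
  have a0: "a0 > 0" unfolding a0_def using r1 by simp
  have l2: "ln (2::real) > 0" by simp
  have l256: "ln (256::real) = 8 * ln 2" using ln_realpow[of 2 8] by simp
  have l512: "ln (512::real) = 9 * ln 2" using ln_realpow[of 2 9] by simp
  have l2048: "ln (2048::real) = 11 * ln 2" using ln_realpow[of 2 11] by simp
  have "ln (c^2 * (t / 2^(Suc N))^3 / 256) \<le> ln (\<epsilon> * v * t powr \<gamma> * \<nu> powr \<beta>)"
    using H1 c t nu v e by (subst ln_le_cancel_iff) auto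
  then have G1: "2 * ln c + 3 * ln t - 3 * (real N + 1) * ln 2 - 8 * ln 2 \<le> ln \<epsilon> + ln v + \<gamma> * ln t + \<beta> * ln \<nu>"
    using c t nu v e l256 by (simp add: ln_mult ln_div ln_realpow ln_powr algebra_simps)
  have "ln (c / 2) < ln (2 * h * sqrt \<nu> * ((\<epsilon> powr (-(\<alpha>/6)) * sqrt t) * (2 powr (-\<alpha>))^N / a0))"
    using H2 c t nu v e h a0 unfolding a0_def[symmetric] by (subst ln_less_cancel_iff) auto
  then have G2: "ln c - ln 2 < ln 2 + ln h + ln \<nu> / 2 - (\<alpha>/6) * ln \<epsilon> + ln t / 2 - real N * \<alpha> * ln 2 - ln a0"
    using c t nu v e h a0 by (simp add: ln_mult ln_div ln_realpow ln_powr ln_sqrt algebra_simps)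
  have E1: "\<alpha> * (2 * ln c + 3 * ln t - 3 * (real N + 1) * ln 2 - 8 * ln 2) \<le> \<alpha> * (ln \<epsilon> + ln v + \<gamma> * ln t + \<beta> * ln \<nu>)"
    using G1 a by (intro mult_left_mono) auto
  then have E1': "2 * (\<alpha> * ln c) + 3 * (\<alpha> * ln t) - 3 * (real N * \<alpha> * ln 2) - 11 * (\<alpha> * ln 2) \<le> \<alpha> * ln \<epsilon> + \<alpha> * ln v + (\<alpha> * \<gamma>) * ln t + (\<alpha> * \<beta>) * ln \<nu>"
    by (simp add: algebra_simps)
  define lX where "lX = \<alpha> * ln v + (\<alpha> * (\<gamma> - 3)) * ln t + (\<alpha> * \<beta>) * ln \<nu> + 3 * ln h + (3/2) * ln \<nu> + (3/2) * ln t"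
  define lD where "lD = 9 * ln 2 + 11 * (\<alpha> * ln 2) - 3 * ln a0"
  have key: "(3 + 2*\<alpha>) * ln c \<le> lD + (\<alpha>/2) * ln \<epsilon> + lX"
  proof -
    have "lD + (\<alpha>/2) * ln \<epsilon> + lX = 9 * ln 2 + 11 * (\<alpha> * ln 2) - 3 * ln a0 + (\<alpha>/2) * ln \<epsilon> + \<alpha> * ln v + (\<alpha> * \<gamma>) * ln t - 3 * (\<alpha> * ln t) + (\<alpha> * \<beta>) * ln \<nu> + 3 * ln h + (3/2) * ln \<nu> + (3/2) * ln t"
      unfolding lD_def lX_def by (simp add: algebra_simps)
    moreover have "(3 + 2*\<alpha>) * ln c = 3 * ln c + 2 * (\<alpha> * ln c)" by (simp add: algebra_simps)
    moreover have "(\<alpha>/2) * ln \<epsilon> = \<alpha> * ln \<epsilon> - 3 * ((\<alpha>/6) * ln \<epsilon>)" by (simp add: algebra_simps)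
    ultimately show ?thesis using E1' G2 l2 by linarith
  qed
  define Y where "Y = v powr \<alpha> * t powr (\<alpha> * (\<gamma> - 3)) * \<nu> powr (\<alpha> * \<beta>) * h ^ 3 * \<nu> powr (3/2) * t powr (3/2)"
  have Y: "Y > 0" unfolding Y_def using v t nu h by simp
  have lY: "ln Y = lX" unfolding Y_def lX_def using v t nu h by (simp add: ln_mult ln_powr ln_realpow)
  define D where "D = 512 * 2048 powr \<alpha> / a0^3"
  have D: "D > 0" unfolding D_def using a0 by simp
  have lDD: "ln D = lD" unfolding D_def lD_def using a0 l512 l2048 by (simp add: ln_mult ln_div ln_powr ln_realpow)
  have pos: "3 + 2*\<alpha> > 0" using a by simp
  have "ln c \<le> (lD + (\<alpha>/2) * ln \<epsilon> + lX) / (3 + 2*\<alpha>)"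
    using key pos by (simp add: field_simps)
  also have "\<dots> = (1 / (3 + 2*\<alpha>)) * lD + (\<alpha> / (2 * (3 + 2*\<alpha>))) * ln \<epsilon> + (1 / (3 + 2*\<alpha>)) * lX"
    using pos by (simp add: add_divide_distrib)
  also have "\<dots> = ln (D powr (1 / (3 + 2*\<alpha>)) * \<epsilon> powr (\<alpha> / (2 * (3 + 2*\<alpha>))) * Y powr (1 / (3 + 2 * \<alpha>)))"
    using D Y e pos lY lDD by (simp add: ln_mult ln_powr)
  finally have "ln c \<le> ln (D powr (1 / (3 + 2*\<alpha>)) * \<epsilon> powr (\<alpha> / (2 * (3 + 2*\<alpha>))) * Y powr (1 / (3 + 2 * \<alpha>)))" .
  then have "c \<le> D powr (1 / (3 + 2*\<alpha>)) * \<epsilon> powr (\<alpha> / (2 * (3 + 2*\<alpha>))) * Y powr (1 / (3 + 2 * \<alpha>))"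
    using c D Y e by (subst (asm) ln_le_cancel_iff) auto
  then show ?thesis unfolding D_def Y_def a0_def .
qed



lemma dy_interval:
  fixes t s0 :: real
  assumes t: "t > 0" and s: "0 \<le> s0" "s0 \<le> t"
  shows "\<exists>j<(2::nat)^n. real j * t / 2^n \<le> s0 \<and> s0 \<le> real (Suc j) * t / 2^n"
proof (cases "s0 = t")
  case True
  have "(2::nat)^n > 0" by simp
  then obtain j where j: "Suc j = 2^n" by (metis Suc_pred)
  then have "real (Suc j) = 2^n" by (metis of_nat_numeral of_nat_power)
  then have e: "real (Suc j) * t / 2^n = t" by simp
  have "real j * t / 2^n \<le> real (Suc j) * t / 2^n" using t by (intro divide_right_mono mult_right_mono) auto
  then show ?thesis using j e True by (intro exI[of _ j]) auto
next
  case False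
  define x where "x = s0 * 2^n / t"
  define j where "j = nat \<lfloor>x\<rfloor>"
  have x0: "0 \<le> x" unfolding x_def using s t by simp
  have xl: "x < 2^n" unfolding x_def using s t False by (simp add: field_simps)
  have jx: "real j \<le> x" "x < real j + 1" unfolding j_def using x0 by linarith+
  have "real j < 2^n" using jx xl by linarith
  then have jl: "j < 2^n" by (metis of_nat_less_iff of_nat_numeral of_nat_power)
  have "real j * t / 2^n \<le> s0" using jx(1) t unfolding x_def by (simp add: field_simps)
  moreover have "s0 \<le> real (Suc j) * t / 2^n" using jx(2) t unfolding x_def by (simp add: field_simps)
  ultimately show ?thesis using jl by blast
qed

lemma core:
  fixes u b :: "real \<Rightarrow> real" and \<nu> t y \<epsilon> \<alpha> v \<gamma> \<beta> :: real
  assumes sp: "smooth_periodic u" and nu: "0 < \<nu>" and t: "0 < t" and bc: "continuous_on {0..t} b"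
    and e: "0 < \<epsilon>" "\<epsilon> \<le> 1" and a: "0 < \<alpha>" and v: "v > 0"
    and good: "\<And>n j. j < 2^n \<Longrightarrow> \<bar>b (real (Suc j) * t / 2^n) - b (real j * t / 2^n)\<bar> \<le> (\<epsilon> powr (-(\<alpha>/6)) * sqrt t) * (2 powr (-\<alpha>))^n"
    and det: "detM u \<nu> t y b \<le> \<epsilon> * v * t powr \<gamma> * \<nu> powr \<beta>"
  shows "sup_du u \<nu> t y b \<le> max 16 ((512 * 2048 powr \<alpha> / (1 - 2 powr (-\<alpha>))^3) powr (1 / (3 + 2*\<alpha>))) * \<epsilon> powr (\<alpha> / (2 * (3 + 2*\<alpha>))) *
     max (v powr (1/2) * t powr ((\<gamma> - 3) / 2) * \<nu> powr (\<beta> / 2))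
       (max ((v powr \<alpha> * t powr (\<alpha> * (\<gamma> - 3)) * \<nu> powr (\<alpha> * \<beta>) * (hfun u \<nu> t y b) ^ 3
                     * \<nu> powr (3/2) * t powr (3/2)) powr (1 / (3 + 2 * \<alpha>)))
            ((v powr (\<alpha> / 2) * t powr ((\<alpha> * (\<gamma> - 3) + 1) / 2)
                     * \<nu> powr ((\<alpha> * \<beta> + 1) / 2) * (hfun u \<nu> t y b)) powr (1 / (1 + \<alpha>))))"
    (is "_ \<le> ?C * ?E * max ?T1 (max ?T2 ?T3)")
proof -
  define h where "h = hfun u \<nu> t y b"
  define g where "g s = deriv u (y + sqrt \<nu> * b s)" for s
  define \<Lambda> where "\<Lambda> = \<epsilon> powr (-(\<alpha>/6)) * sqrt t"
  define r :: real where "r = 2 powr (-\<alpha>)"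
  define w where "w n = \<Lambda> * r^n" for n
  define W where "W n = w n / (1 - r)" for n
  have g1: "1 < (2::real) powr \<alpha>" using a by (intro gr_one_powr) auto
  have r1: "r < 1" unfolding r_def using g1 by (simp add: powr_minus inverse_less_1_iff)
  have r0: "r > 0" unfolding r_def by simp
  have L0: "\<Lambda> > 0" unfolding \<Lambda>_def using e t by simp
  have h0: "0 \<le> h" unfolding h_def using h_nonneg[OF sp _ bc] t by simp
  have w0: "0 \<le> w n" for n unfolding w_def using L0 r0 by simp
  have wW: "w n \<le> W n" for n
  proof -
    have "w n * (1 - r) \<le> w n" using w0[of n] r0 by (simp add: mult_left_le)
    then show ?thesis unfolding W_def using r1 by (simp add: field_simps)
  qed
  have rec: "w (Suc n) + W (Suc n) \<le> W n" for n
  proof -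
    have q: "r * (2 - r) \<le> 1" using zero_le_power2[of "1 - r"] by (simp add: power2_eq_square algebra_simps)
    have "(w (Suc n) + W (Suc n)) * (1 - r) = w n * (r * (2 - r))"
      unfolding W_def w_def using r1 by (simp add: field_simps)
    also have "\<dots> \<le> w n" using q w0[of n] by (simp add: mult_left_le)
    finally show ?thesis unfolding W_def using r1 by (simp add: field_simps)
  qed
  have goodw: "\<And>n j. j < 2^n \<Longrightarrow> \<bar>b (real (Suc j) * t / 2^n) - b (real j * t / 2^n)\<bar> \<le> w n"
    using good unfolding w_def \<Lambda>_def r_def by simp
  note CD = chain_dyadic[OF goodw wW rec]
  have osc: "\<bar>g s - g s'\<bar> \<le> h * sqrt \<nu> * (2 * W n)"
    if j: "j < 2^n" and s: "s \<in> {real j * t / 2^n .. real (Suc j) * t / 2^n}" and s': "s' \<in> {real j * t / 2^n .. real (Suc j) * t / 2^n}" for n j s s'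
  proof -
    have "\<bar>b s - b (real j * t / 2^n)\<bar> \<le> W n" using s by (intro chain_cont[OF t bc CD j]) auto
    moreover have "\<bar>b s' - b (real j * t / 2^n)\<bar> \<le> W n" using s' by (intro chain_cont[OF t bc CD j]) auto
    ultimately have bb: "\<bar>b s - b s'\<bar> \<le> 2 * W n" by linarith
    have jt: "real (Suc j) * t / 2^n \<le> t"
    proof -
      have "Suc j \<le> 2^n" using j by simp
      then have "real (Suc j) \<le> 2^n" by (metis of_nat_le_iff of_nat_numeral of_nat_power)
      then have "real (Suc j) * t / 2^n \<le> 2^n * t / 2^n" using t by (intro divide_right_mono mult_right_mono) auto
      then show ?thesis by simp
    qed
    have j0: "0 \<le> real j * t / 2^n" using t by simp
    have s1: "s \<in> {0..t}" using s jt j0 by auto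
    have s2: "s' \<in> {0..t}" using s' jt j0 by auto
    have "\<bar>g s - g s'\<bar> \<le> h * sqrt \<nu> * \<bar>b s - b s'\<bar>" unfolding g_def h_def
      using g_lip[OF sp _ bc _ s1 s2] t nu by auto
    also have "\<dots> \<le> h * sqrt \<nu> * (2 * W n)" using bb h0 nu by (intro mult_left_mono) auto
    finally show ?thesis .
  qed
  have gc: "continuous_on {0..t} g" unfolding g_def by (rule g_cont[OF sp bc])
  have C0: "?C > 0" by simp
  have E0: "?E > 0" using e by simp
  have T10: "?T1 > 0" using v t nu by simp
  have Mge: "?T1 \<le> max ?T1 (max ?T2 ?T3)" "?T2 \<le> max ?T1 (max ?T2 ?T3)" by auto
  have ptwise: "\<bar>g s0\<bar> \<le> ?C * ?E * max ?T1 (max ?T2 ?T3)" if s0: "s0 \<in> {0..t}" for s0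
  proof (cases "g s0 = 0")
    case True
    then show ?thesis using C0 E0 T10 Mge by (simp add: order.trans[OF _ Mge(1)] less_imp_le)
  next
    case False
    define c where "c = \<bar>g s0\<bar>"
    have c0: "c > 0" unfolding c_def using False by simp
    have lower: "c^2 * (t / 2^n)^3 / 256 \<le> \<epsilon> * v * t powr \<gamma> * \<nu> powr \<beta>"
      if P: "2 * h * sqrt \<nu> * W n \<le> c / 2" for n
    proof -
      obtain j where j: "j < 2^n" "real j * t / 2^n \<le> s0" "s0 \<le> real (Suc j) * t / 2^n"
        using dy_interval[OF t, of s0 n] s0 by auto
      have close: "\<bar>g s - g s0\<bar> \<le> c/2" if "s \<in> {real j * t / 2^n .. real j * t / 2^n + t / 2^n}" for s
      proof -
        have "s \<in> {real j * t / 2^n .. real (Suc j) * t / 2^n}" using that by (simp add: field_simps)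
        from osc[OF j(1) this] j have "\<bar>g s - g s0\<bar> \<le> h * sqrt \<nu> * (2 * W n)" by auto
        then show ?thesis using P by (simp add: mult_ac)
      qed
      have sg: "(\<forall>s\<in>{real j * t / 2^n .. real j * t / 2^n + t / 2^n}. c/2 \<le> g s) \<or>
                (\<forall>s\<in>{real j * t / 2^n .. real j * t / 2^n + t / 2^n}. g s \<le> -(c/2))"
      proof (cases "g s0 \<ge> 0")
        case True
        have "\<forall>s\<in>{real j * t / 2^n .. real j * t / 2^n + t / 2^n}. c/2 \<le> g s"
        proof
          fix s assume "s \<in> {real j * t / 2^n .. real j * t / 2^n + t / 2^n}"
          from close[OF this] True show "c/2 \<le> g s" unfolding c_def by (auto simp: abs_le_iff abs_if split: if_splits)
        qed
        then show ?thesis by blast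
      next
        case False
        have "\<forall>s\<in>{real j * t / 2^n .. real j * t / 2^n + t / 2^n}. g s \<le> -(c/2)"
        proof
          fix s assume "s \<in> {real j * t / 2^n .. real j * t / 2^n + t / 2^n}"
          from close[OF this] False show "g s \<le> -(c/2)" unfolding c_def by (auto simp: abs_le_iff abs_if split: if_splits)
        qed
        then show ?thesis by blast
      qed
      have jt: "real j * t / 2^n + t / 2^n \<le> t"
      proof -
        have "Suc j \<le> 2^n" using j by simp
        then have "real (Suc j) \<le> 2^n" by (metis of_nat_le_iff of_nat_numeral of_nat_power)
        then have "real (Suc j) * t / 2^n \<le> 2^n * t / 2^n" using t by (intro divide_right_mono mult_right_mono) auto
        then show ?thesis by (simp add: field_simps)
      qed
      have "(c/2)^2 * (t/2^n)^3 / 64 \<le> integral {0..t} (\<lambda>r. (integral {r..t} g - (1/t) * integral {0..t} (\<lambda>m. integral {m..t} g))^2)"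
        by (rule det_lower[OF gc _ jt _ _ sg]) (use t c0 in auto)
      also have "\<dots> = detM u \<nu> t y b" unfolding detM_def g_def ..
      finally show ?thesis using det by (simp add: power2_eq_square)
    qed
    show ?thesis
    proof (cases "2 * h * sqrt \<nu> * W 0 \<le> c / 2")
      case True
      from lower[OF True] have "c^2 * t^3 / 256 \<le> \<epsilon> * v * t powr \<gamma> * \<nu> powr \<beta>" by simp
      from alg_A[OF c0 t nu v e _ _ this, of "\<alpha> / (2 * (3 + 2*\<alpha>))"] a
      have "c \<le> 16 * ?E * ?T1" by (simp add: field_simps)
      also have "\<dots> \<le> ?C * ?E * ?T1" using E0 T10 by (intro mult_right_mono) auto
      also have "\<dots> \<le> ?C * ?E * max ?T1 (max ?T2 ?T3)" using C0 E0 by (intro mult_left_mono) auto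
      finally show ?thesis unfolding c_def .
    next
      case notP0: False
      have lim: "(\<lambda>n. 2 * h * sqrt \<nu> * W n) \<longlonglongrightarrow> 2 * h * sqrt \<nu> * (\<Lambda> * 0 / (1 - r))"
        unfolding W_def w_def by (intro tendsto_intros LIMSEQ_power_zero) (use r0 r1 in auto)
      then have "\<forall>\<^sub>F n in sequentially. 2 * h * sqrt \<nu> * W n < c / 2"
        using c0 by (intro order_tendstoD(2)) auto
      then obtain N0 where "\<forall>n\<ge>N0. 2 * h * sqrt \<nu> * W n < c / 2" by (auto simp: eventually_sequentially)
      then have Pn: "2 * h * sqrt \<nu> * W N0 \<le> c / 2" by (meson less_imp_le order.refl)
      define n0 where "n0 = (LEAST n. 2 * h * sqrt \<nu> * W n \<le> c / 2)"
      have Pn0: "2 * h * sqrt \<nu> * W n0 \<le> c / 2" unfolding n0_def by (rule LeastI[of _ N0]) (rule Pn)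
      have "n0 \<noteq> 0" using Pn0 notP0 by (metis)
      then obtain N where N: "n0 = Suc N" by (cases n0) auto
      have notPN: "\<not> 2 * h * sqrt \<nu> * W N \<le> c / 2"
        using not_less_Least[of N "\<lambda>n. 2 * h * sqrt \<nu> * W n \<le> c / 2"] N unfolding n0_def by auto
      have H1: "c^2 * (t / 2^(Suc N))^3 / 256 \<le> \<epsilon> * v * t powr \<gamma> * \<nu> powr \<beta>" using lower[OF Pn0] N by simp
      have H2: "c / 2 < 2 * h * sqrt \<nu> * ((\<epsilon> powr (-(\<alpha>/6)) * sqrt t) * (2 powr (-\<alpha>))^N / (1 - 2 powr (-\<alpha>)))"
        using notPN unfolding W_def w_def \<Lambda>_def r_def by simp
      have hp: "h > 0"
      proof (rule ccontr)
        assume "\<not> h > 0" then have "h = 0" using h0 by simp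
        then show False using H2 c0 by simp
      qed
      from alg_B[OF c0 t nu v e a hp H1 H2]
      have "c \<le> (512 * 2048 powr \<alpha> / (1 - 2 powr (-\<alpha>))^3) powr (1 / (3 + 2*\<alpha>)) * ?E * ?T2" unfolding h_def .
      also have "\<dots> \<le> ?C * ?E * ?T2" by (intro mult_right_mono) auto
      also have "\<dots> \<le> ?C * ?E * max ?T1 (max ?T2 ?T3)" using C0 E0 by (intro mult_left_mono) auto
      finally show ?thesis unfolding c_def .
    qed
  qed
  show ?thesis unfolding g_def[symmetric]
    by (rule sup_du_le) (use t ptwise[unfolded g_def] in auto)
qed



lemma subset_helper:
  "(\<And>\<omega>. \<omega> \<in> space M \<Longrightarrow> \<omega> \<notin> E \<Longrightarrow> P \<omega> \<Longrightarrow> Q \<omega>) \<Longrightarrow> ({\<omega>\<in>space M. P \<omega>} - {\<omega>\<in>space M. Q \<omega>}) \<inter> space M \<subseteq> E"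
  by auto

theorem lemma2p3:
  fixes u :: "real \<Rightarrow> real" and \<gamma> \<beta> \<alpha> :: real
  assumes "smooth_periodic u" and "\<gamma> > 0" and "\<beta> > 0" and "0 < \<alpha>" and "\<alpha> < 1/2"
  shows "\<exists>C>0. \<exists>q>0. \<forall>(M :: 'a measure) B v.
    std_brownian_motion M B \<longrightarrow> v \<in> borel_measurable M \<longrightarrow> (\<forall>\<omega>\<in>space M. v \<omega> > 0) \<longrightarrow>
    almost_implies M {(\<nu>, t, y). 0 < \<nu> \<and> \<nu> \<le> 1 \<and> 0 < t \<and> t \<le> 1 / \<nu>}
      (\<lambda>(\<nu>, t, y) \<epsilon>. {\<omega> \<in> space M.
          detM u \<nu> t y (\<lambda>s. B s \<omega>) \<le> \<epsilon> * v \<omega> * t powr \<gamma> * \<nu> powr \<beta>})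
      (\<lambda>(\<nu>, t, y) \<epsilon>. {\<omega> \<in> space M.
          let h = hfun u \<nu> t y (\<lambda>s. B s \<omega>) in
          sup_du u \<nu> t y (\<lambda>s. B s \<omega>) \<le> C * \<epsilon> powr q *
            max (v \<omega> powr (1/2) * t powr ((\<gamma> - 3) / 2) * \<nu> powr (\<beta> / 2))
             (max ((v \<omega> powr \<alpha> * t powr (\<alpha> * (\<gamma> - 3)) * \<nu> powr (\<alpha> * \<beta>) * h ^ 3
                     * \<nu> powr (3/2) * t powr (3/2)) powr (1 / (3 + 2 * \<alpha>)))
                  ((v \<omega> powr (\<alpha> / 2) * t powr ((\<alpha> * (\<gamma> - 3) + 1) / 2)
                     * \<nu> powr ((\<alpha> * \<beta> + 1) / 2) * h) powr (1 / (1 + \<alpha>))))})"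
proof -
  note sp = assms(1) and a = assms(4) and a2 = assms(5)
  define C where "C = max 16 ((512 * 2048 powr \<alpha> / (1 - 2 powr (-\<alpha>))^3) powr (1 / (3 + 2*\<alpha>)))"
  define q where "q = \<alpha> / (2 * (3 + 2*\<alpha>))"
  have C0: "C > 0" unfolding C_def by simp
  have q0: "q > 0" unfolding q_def using a by simp
  show ?thesis
  proof (rule exI[of _ C], rule conjI[OF C0], rule exI[of _ q], rule conjI[OF q0], intro allI impI)
    fix M :: "'a measure" and B :: "real \<Rightarrow> 'a \<Rightarrow> real" and v :: "'a \<Rightarrow> real"
    assume BM: "std_brownian_motion M B" and vm: "v \<in> borel_measurable M" and vp: "\<forall>\<omega>\<in>space M. v \<omega> > 0"
    show "almost_implies M {(\<nu>, t, y). 0 < \<nu> \<and> \<nu> \<le> 1 \<and> 0 < t \<and> t \<le> 1 / \<nu>}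
      (\<lambda>(\<nu>, t, y) \<epsilon>. {\<omega> \<in> space M.
          detM u \<nu> t y (\<lambda>s. B s \<omega>) \<le> \<epsilon> * v \<omega> * t powr \<gamma> * \<nu> powr \<beta>})
      (\<lambda>(\<nu>, t, y) \<epsilon>. {\<omega> \<in> space M.
          let h = hfun u \<nu> t y (\<lambda>s. B s \<omega>) in
          sup_du u \<nu> t y (\<lambda>s. B s \<omega>) \<le> C * \<epsilon> powr q *
            max (v \<omega> powr (1/2) * t powr ((\<gamma> - 3) / 2) * \<nu> powr (\<beta> / 2))
             (max ((v \<omega> powr \<alpha> * t powr (\<alpha> * (\<gamma> - 3)) * \<nu> powr (\<alpha> * \<beta>) * h ^ 3
                     * \<nu> powr (3/2) * t powr (3/2)) powr (1 / (3 + 2 * \<alpha>)))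
                  ((v \<omega> powr (\<alpha> / 2) * t powr ((\<alpha> * (\<gamma> - 3) + 1) / 2)
                     * \<nu> powr ((\<alpha> * \<beta> + 1) / 2) * h) powr (1 / (1 + \<alpha>))))})"
      unfolding almost_implies_def almost_false_def
    proof (intro allI impI)
      fix p :: real assume p: "p > 0"
      define k where "k = nat \<lceil>2 / (1 - 2*\<alpha>) + 3 * p / \<alpha>\<rceil>"
      have kge: "2 / (1 - 2*\<alpha>) + 3 * p / \<alpha> \<le> real k" unfolding k_def by linarith
      have t1: "0 \<le> 3 * p / \<alpha>" using p a by simp
      have t2: "0 \<le> 2 / (1 - 2*\<alpha>)" using a2 by simp
      have k1: "real k * (1 - 2*\<alpha>) \<ge> 2"
      proof -
        have "2 / (1 - 2*\<alpha>) \<le> real k" using kge t1 by linarith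
        then have "2 / (1 - 2*\<alpha>) * (1 - 2*\<alpha>) \<le> real k * (1 - 2*\<alpha>)" using a2 by (intro mult_right_mono) auto
        moreover have "2 / (1 - 2*\<alpha>) * (1 - 2*\<alpha>) = 2" using a2 by (simp add: field_simps)
        ultimately show ?thesis by simp
      qed
      have k2: "2 * (\<alpha>/6) * real k \<ge> p"
      proof -
        have "3 * p / \<alpha> \<le> real k" using kge t2 by linarith
        then have "3 * p / \<alpha> * (\<alpha>/3) \<le> real k * (\<alpha>/3)" using a by (intro mult_right_mono) auto
        then show ?thesis using a by (simp add: field_simps)
      qed
      show "\<exists>Cp \<epsilon>0. \<epsilon>0 > 0 \<and> (\<forall>z\<in>{(\<nu>, t, y). 0 < \<nu> \<and> \<nu> \<le> 1 \<and> 0 < t \<and> t \<le> 1 / \<nu>}. \<forall>\<epsilon>. 0 < \<epsilon> \<longrightarrow> \<epsilon> \<le> \<epsilon>0 \<longrightarrow>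
           (\<exists>E\<in>sets M. ((\<lambda>(\<nu>, t, y) \<epsilon>. {\<omega> \<in> space M.
          detM u \<nu> t y (\<lambda>s. B s \<omega>) \<le> \<epsilon> * v \<omega> * t powr \<gamma> * \<nu> powr \<beta>}) z \<epsilon> - (\<lambda>(\<nu>, t, y) \<epsilon>. {\<omega> \<in> space M.
          let h = hfun u \<nu> t y (\<lambda>s. B s \<omega>) in
          sup_du u \<nu> t y (\<lambda>s. B s \<omega>) \<le> C * \<epsilon> powr q *
            max (v \<omega> powr (1/2) * t powr ((\<gamma> - 3) / 2) * \<nu> powr (\<beta> / 2))
             (max ((v \<omega> powr \<alpha> * t powr (\<alpha> * (\<gamma> - 3)) * \<nu> powr (\<alpha> * \<beta>) * h ^ 3
                     * \<nu> powr (3/2) * t powr (3/2)) powr (1 / (3 + 2 * \<alpha>)))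
                  ((v \<omega> powr (\<alpha> / 2) * t powr ((\<alpha> * (\<gamma> - 3) + 1) / 2)
                     * \<nu> powr ((\<alpha> * \<beta> + 1) / 2) * h) powr (1 / (1 + \<alpha>))))}) z \<epsilon>) \<inter> space M \<subseteq> E \<and>
              measure M E \<le> Cp * \<epsilon> powr p))"
      proof (rule exI[of _ "2 * (fact (2*k) / (2^k * fact k))"], rule exI[of _ 1], intro conjI ballI allI impI)
        fix z :: "real \<times> real \<times> real" and \<epsilon> :: real
        assume z: "z \<in> {(\<nu>, t, y). 0 < \<nu> \<and> \<nu> \<le> 1 \<and> 0 < t \<and> t \<le> 1 / \<nu>}" and e0: "0 < \<epsilon>" and e1: "\<epsilon> \<le> 1"
        obtain \<nu> t y :: real where zd: "z = (\<nu>, t, y)" by (cases z) auto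
        have nu: "0 < \<nu>" and t: "0 < t" using z zd by auto
        define E where "E = badset M B t (\<epsilon> powr (-(\<alpha>/6)) * sqrt t) (2 powr (-\<alpha>))"
        show "\<exists>E\<in>sets M. ((\<lambda>(\<nu>, t, y) \<epsilon>. {\<omega> \<in> space M.
          detM u \<nu> t y (\<lambda>s. B s \<omega>) \<le> \<epsilon> * v \<omega> * t powr \<gamma> * \<nu> powr \<beta>}) z \<epsilon> - (\<lambda>(\<nu>, t, y) \<epsilon>. {\<omega> \<in> space M.
          let h = hfun u \<nu> t y (\<lambda>s. B s \<omega>) in
          sup_du u \<nu> t y (\<lambda>s. B s \<omega>) \<le> C * \<epsilon> powr q *
            max (v \<omega> powr (1/2) * t powr ((\<gamma> - 3) / 2) * \<nu> powr (\<beta> / 2))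
             (max ((v \<omega> powr \<alpha> * t powr (\<alpha> * (\<gamma> - 3)) * \<nu> powr (\<alpha> * \<beta>) * h ^ 3
                     * \<nu> powr (3/2) * t powr (3/2)) powr (1 / (3 + 2 * \<alpha>)))
                  ((v \<omega> powr (\<alpha> / 2) * t powr ((\<alpha> * (\<gamma> - 3) + 1) / 2)
                     * \<nu> powr ((\<alpha> * \<beta> + 1) / 2) * h) powr (1 / (1 + \<alpha>))))}) z \<epsilon>) \<inter> space M \<subseteq> E \<and> measure M E \<le> 2 * (fact (2*k) / (2^k * fact k)) * \<epsilon> powr p"
        proof (intro bexI[of _ E] conjI)
          show "E \<in> sets M" unfolding E_def by (rule badset_sets[OF BM t])
          show "measure M E \<le> 2 * (fact (2*k) / (2^k * fact k)) * \<epsilon> powr p"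
            unfolding E_def using bad_bound[OF BM t e0 e1 k1 k2] .
          have cont: "continuous_on {0..t} (\<lambda>s. B s \<omega>)" if "\<omega> \<in> space M" for \<omega>
          proof -
            have "continuous_on {0..} (\<lambda>s. B s \<omega>)" using BM that unfolding std_brownian_motion_def by auto
            then show ?thesis by (rule continuous_on_subset) auto
          qed
          have good: "\<bar>B (real (Suc j) * t / 2^n) \<omega> - B (real j * t / 2^n) \<omega>\<bar> \<le> (\<epsilon> powr (-(\<alpha>/6)) * sqrt t) * (2 powr (-\<alpha>))^n"
            if "\<omega> \<in> space M" "\<omega> \<notin> E" "j < 2^n" for \<omega> n j
          proof -
            have "\<not> (\<epsilon> powr (-(\<alpha>/6)) * sqrt t * (2 powr (-\<alpha>))^n \<le> \<bar>B (real (Suc j) * t / 2^n) \<omega> - B (real j * t / 2^n) \<omega>\<bar>)"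
              using that unfolding E_def badset_def by blast
            then show ?thesis by simp
          qed
          show "((\<lambda>(\<nu>, t, y) \<epsilon>. {\<omega> \<in> space M.
          detM u \<nu> t y (\<lambda>s. B s \<omega>) \<le> \<epsilon> * v \<omega> * t powr \<gamma> * \<nu> powr \<beta>}) z \<epsilon> - (\<lambda>(\<nu>, t, y) \<epsilon>. {\<omega> \<in> space M.
          let h = hfun u \<nu> t y (\<lambda>s. B s \<omega>) in
          sup_du u \<nu> t y (\<lambda>s. B s \<omega>) \<le> C * \<epsilon> powr q *
            max (v \<omega> powr (1/2) * t powr ((\<gamma> - 3) / 2) * \<nu> powr (\<beta> / 2))
             (max ((v \<omega> powr \<alpha> * t powr (\<alpha> * (\<gamma> - 3)) * \<nu> powr (\<alpha> * \<beta>) * h ^ 3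
                     * \<nu> powr (3/2) * t powr (3/2)) powr (1 / (3 + 2 * \<alpha>)))
                  ((v \<omega> powr (\<alpha> / 2) * t powr ((\<alpha> * (\<gamma> - 3) + 1) / 2)
                     * \<nu> powr ((\<alpha> * \<beta> + 1) / 2) * h) powr (1 / (1 + \<alpha>))))}) z \<epsilon>) \<inter> space M \<subseteq> E"
            unfolding zd split_conv Let_def C_def q_def
            apply (rule subset_helper)
            subgoal for \<omega>
              apply (rule core[OF sp nu t cont e0 e1 a])
                apply assumption
               apply (simp add: vp)
              apply (rule good; assumption)
              apply assumption
              done
            done
        qed
      qed simp
    qed
  qed
qed


end
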